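(* Let $D=[0,1]$ or $D=S^1$, and assume the reproducing kernel Hilbert space $\mathcal{H}$ defining $\|\cdot\|_{\mathcal{V}}$ is continuously embedded into $C_0^1(\mathbb{R}^d\times S^{d-1})$. Let $(c_p)_{p\in\mathbb{N}}$ be a sequence of $C^1$ immersions $D\to\mathbb{R}^d$ converging to a $C^1$ immersion $c_\infty:D\to\mathbb{R}^d$ in the norm $\|c\|_{1,\infty}=\|c\|_\infty+\|\partial_\theta c\|_\infty$. Then $\|\mu_{c_p}-\mu_{c_\infty}\|_{\mathcal{V}}\to0$ as $p\to\infty$.
   Context: A $C^1$ immersion is a $C^1$ map $c$ with $\partial_\theta c(\theta)\neq0$ for all $\theta$. Let $\mathcal{K}$ be a positive definite kernel on $\mathbb{R}^d\times S^{d-1}$ with RKHS $\mathcal{H}$; $C_0^1(\mathbb{R}^d\times S^{d-1})$ is the space of $C^1$ functions vanishing at infinity together with their first derivatives, with norm $\|\omega\|_{1,\infty}=\|\omega\|_\infty+\|d\omega\|_\infty$. For a finite signed Radon measure $\mu$ on $\mathbb{R}^d\times S^{d-1}$, $\|\mu\|_{\mathcal{V}}=\sup_{\omega\in\mathcal{H},\|\omega\|_{\mathcal{H}}\le1}\int\omega\,d\mu$. For an immersion $c:D\to\mathbb{R}^d$, $\mu_c$ is the measure defined by $\int\omega\,d\mu_c=\int_D\omega\big(c(\theta),\partial_\theta c(\theta)/|\partial_\theta c(\theta)|\big)|\partial_\theta c(\theta)|\,d\theta$. *)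

theory Defs
  imports "HOL-Analysis.Analysis"
begin

definition Xset :: "('a::euclidean_space \<times> 'a) set" where
  "Xset = UNIV \<times> sphere 0 1"

text \<open>Open neighbourhood R^d x (R^d - {0}) and the canonical (0-homogeneous in v)
  extension of a function on R^d x S^(d-1) to it.  A function on R^d x S^(d-1) is C^1
  iff this extension is C^1, and at points of R^d x S^(d-1) the operator norm of the
  derivative of the extension equals the norm of the (tangential) differential.\<close>

definition Uset :: "('a::euclidean_space \<times> 'a) set" where
  "Uset = UNIV \<times> (UNIV - {0})"

definition ext_sph :: "('a::euclidean_space \<times> 'a \<Rightarrow> real) \<Rightarrow> 'a \<times> 'a \<Rightarrow> real" where
  "ext_sph \<omega> = (\<lambda>(x, v). \<omega> (x, v /\<^sub>R norm v))"

definition dnorm :: "('a::euclidean_space \<times> 'a \<Rightarrow> real) \<Rightarrow> 'a \<times> 'a \<Rightarrow> real" where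
  "dnorm \<omega> z = onorm (frechet_derivative (ext_sph \<omega>) (at z))"

definition C01 :: "('a::euclidean_space \<times> 'a \<Rightarrow> real) \<Rightarrow> bool" where
  "C01 \<omega> \<longleftrightarrow>
     (\<exists>D :: 'a \<times> 'a \<Rightarrow> ('a \<times> 'a) \<Rightarrow>\<^sub>L real.
        (\<forall>z\<in>Uset. (ext_sph \<omega> has_derivative blinfun_apply (D z)) (at z)) \<and> continuous_on Uset D)
   \<and> (\<forall>e>0. \<exists>R. \<forall>x v. norm v = 1 \<longrightarrow> norm x \<ge> R \<longrightarrow>
          \<bar>\<omega> (x, v)\<bar> < e \<and> dnorm \<omega> (x, v) < e)"

definition norm1inf :: "('a::euclidean_space \<times> 'a \<Rightarrow> real) \<Rightarrow> real" where
  "norm1inf \<omega> = (SUP z\<in>Xset. \<bar>\<omega> z\<bar>) + (SUP z\<in>Xset. dnorm \<omega> z)"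

definition pos_def_kernel :: "('b \<Rightarrow> 'b \<Rightarrow> real) \<Rightarrow> 'b set \<Rightarrow> bool" where
  "pos_def_kernel K X \<longleftrightarrow> (\<forall>x\<in>X. \<forall>y\<in>X. K x y = K y x) \<and>
     (\<forall>n (p :: nat \<Rightarrow> 'b) (a :: nat \<Rightarrow> real). (\<forall>i<n. p i \<in> X) \<longrightarrow>
        (\<Sum>i<n. \<Sum>j<n. a i * a j * K (p i) (p j)) \<ge> 0)"

text \<open>The RKHS H of K on X is represented by a real Hilbert space 'h together with the
  reproducing elements kx z = K(z,.) in H: an element f of H is the function
  (rk_eval kx f) z = <f, kx z>, K(y,z) = <kx y, kx z>, and distinct elements of 'h give
  distinct functions on X (i.e. 'h really is a space of functions on X).  By Moore-Aronszajn
  this determines H (with its norm) uniquely up to isometry.\<close>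

definition rk_eval :: "('b \<Rightarrow> 'h::real_inner) \<Rightarrow> 'h \<Rightarrow> 'b \<Rightarrow> real" where
  "rk_eval kx f = (\<lambda>z. inner f (kx z))"

definition is_rkhs :: "('b \<Rightarrow> 'b \<Rightarrow> real) \<Rightarrow> 'b set \<Rightarrow> ('b \<Rightarrow> 'h::{real_inner,complete_space}) \<Rightarrow> bool" where
  "is_rkhs K X kx \<longleftrightarrow> (\<forall>y\<in>X. \<forall>z\<in>X. K y z = inner (kx y) (kx z)) \<and>
     (\<forall>f. (\<forall>z\<in>X. rk_eval kx f z = 0) \<longrightarrow> f = 0)"

definition cont_embedded_C01 :: "('a::euclidean_space \<times> 'a \<Rightarrow> 'h::real_inner) \<Rightarrow> bool" where
  "cont_embedded_C01 kx \<longleftrightarrow> (\<forall>f. C01 (rk_eval kx f)) \<and>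
     (\<exists>C. \<forall>f. norm1inf (rk_eval kx f) \<le> C * norm f)"

text \<open>||mu||_V for a (signed) measure given through its integration functional.\<close>
definition Vnorm :: "('b \<Rightarrow> 'h::real_inner) \<Rightarrow> (('b \<Rightarrow> real) \<Rightarrow> real) \<Rightarrow> real" where
  "Vnorm kx \<mu> = (SUP f\<in>{f. norm f \<le> 1}. \<mu> (rk_eval kx f))"

text \<open>Parameter domain: per = False means D = [0,1]; per = True means D = S^1 = R/Z,
  curves being 1-periodic maps R -> R^d.\<close>

definition Dset :: "bool \<Rightarrow> real set" where
  "Dset per = (if per then UNIV else {0..1})"

definition cder :: "bool \<Rightarrow> (real \<Rightarrow> 'a::real_normed_vector) \<Rightarrow> real \<Rightarrow> 'a" where
  "cder per c t = vector_derivative c (at t within Dset per)"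

definition C1_immersion :: "bool \<Rightarrow> (real \<Rightarrow> 'a::euclidean_space) \<Rightarrow> bool" where
  "C1_immersion per c \<longleftrightarrow>
     (per \<longrightarrow> (\<forall>t. c (t + 1) = c t)) \<and>
     (\<forall>t\<in>Dset per. (c has_vector_derivative cder per c t) (at t within Dset per)) \<and>
     continuous_on (Dset per) (cder per c) \<and>
     (\<forall>t\<in>Dset per. cder per c t \<noteq> 0)"

definition dist1inf :: "bool \<Rightarrow> (real \<Rightarrow> 'a::euclidean_space) \<Rightarrow> (real \<Rightarrow> 'a) \<Rightarrow> real" where
  "dist1inf per c e = (SUP t\<in>{0..1}. norm (c t - e t)) + (SUP t\<in>{0..1}. norm (cder per c t - cder per e t))"

definition mu_curve :: "bool \<Rightarrow> (real \<Rightarrow> 'a::euclidean_space) \<Rightarrow> ('a \<times> 'a \<Rightarrow> real) \<Rightarrow> real" where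
  "mu_curve per c \<omega> = integral {0..1}
     (\<lambda>t. \<omega> (c t, cder per c t /\<^sub>R norm (cder per c t)) * norm (cder per c t))"

end

theory Submission
  imports Defs
begin


lemma bdd_Xset:
  fixes g :: "'a::euclidean_space \<times> 'a \<Rightarrow> real"
  assumes cg: "continuous_on Xset g"
    and v: "\<forall>e>0. \<exists>R. \<forall>x v. norm v = 1 \<longrightarrow> norm x \<ge> R \<longrightarrow> \<bar>g (x,v)\<bar> < e"
  shows "\<exists>B. \<forall>z\<in>(Xset::('a\<times>'a) set). \<bar>g z\<bar> \<le> B"
proof -
  obtain R where R: "\<forall>x v. norm v = 1 \<longrightarrow> norm x \<ge> R \<longrightarrow> \<bar>g (x,v)\<bar> < 1"
    using v by (meson zero_less_one)
  define K where "K = cball (0::'a) R \<times> sphere (0::'a) 1"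
  have "compact K" unfolding K_def by (intro compact_Times compact_cball compact_sphere)
  moreover have "K \<subseteq> Xset" unfolding K_def Xset_def by auto
  ultimately have "compact (g ` K)" using cg by (meson compact_continuous_image continuous_on_subset)
  then obtain B where B: "\<forall>y\<in>g ` K. norm y \<le> B" using compact_imp_bounded bounded_iff by metis
  show ?thesis
  proof (intro exI ballI)
    fix z :: "'a \<times> 'a" assume z: "z \<in> Xset"
    obtain x v where zz: "z = (x,v)" by fastforce
    have nv: "norm v = 1" using z zz unfolding Xset_def by auto
    show "\<bar>g z\<bar> \<le> max B 1"
    proof (cases "norm x \<ge> R")
      case True thus ?thesis using R nv zz by force
    next
      case False
      hence "z \<in> K" using zz nv unfolding K_def by auto
      thus ?thesis using B by force
    qed
  qed
qed

lemma ext_sph_unit: "norm v = 1 \<Longrightarrow> ext_sph \<omega> (x, v) = \<omega> (x, v)"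
  unfolding ext_sph_def by simp

lemma Xset_Uset: "Xset \<subseteq> Uset"
  unfolding Xset_def Uset_def by auto

lemma C01_D:
  assumes "C01 \<omega>"
  obtains D where "\<And>z. z\<in>Uset \<Longrightarrow> (ext_sph \<omega> has_derivative blinfun_apply (D z)) (at z)"
    "continuous_on Uset D" "\<And>z. z\<in>Uset \<Longrightarrow> dnorm \<omega> z = norm (D z)"
proof -
  obtain D where D: "\<forall>z\<in>Uset. (ext_sph \<omega> has_derivative blinfun_apply (D z)) (at z)"
      "continuous_on Uset D" using assms unfolding C01_def by blast
  have "dnorm \<omega> z = norm (D z)" if "z \<in> Uset" for z
    using D(1) that frechet_derivative_at unfolding dnorm_def
    by (metis norm_blinfun.rep_eq)
  thus ?thesis using D(1,2) by (intro that[of D]) auto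
qed

lemma C01_cont:
  assumes "C01 \<omega>" shows "continuous_on Xset \<omega>"
proof -
  obtain D where D: "\<And>z. z\<in>Uset \<Longrightarrow> (ext_sph \<omega> has_derivative blinfun_apply (D z)) (at z)"
    using C01_D[OF assms] by metis
  have "continuous_on Uset (ext_sph \<omega>)"
    using D by (meson continuous_at_imp_continuous_on has_derivative_continuous)
  hence "continuous_on Xset (ext_sph \<omega>)" using Xset_Uset continuous_on_subset by blast
  moreover have "\<And>z. z \<in> Xset \<Longrightarrow> ext_sph \<omega> z = \<omega> z"
    unfolding Xset_def using ext_sph_unit by fastforce
  ultimately show ?thesis using continuous_on_eq by blast
qed

lemma C01_bounds:
  assumes "C01 \<omega>" and "norm1inf \<omega> \<le> K"
  shows "\<And>z. z \<in> Xset \<Longrightarrow> \<bar>\<omega> z\<bar> \<le> K" "\<And>z. z \<in> Xset \<Longrightarrow> dnorm \<omega> z \<le> K"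
    "\<And>z. z \<in> Xset \<Longrightarrow> 0 \<le> dnorm \<omega> z"
proof -
  obtain D where D0: "\<And>z. z\<in>Uset \<Longrightarrow> (ext_sph \<omega> has_derivative blinfun_apply (D z)) (at z)"
    and D: "continuous_on Uset D" "\<And>z. z\<in>Uset \<Longrightarrow> dnorm \<omega> z = norm (D z)"
    using C01_D[OF assms(1)] by metis
  have v: "\<forall>e>0. \<exists>R. \<forall>x v. norm v = 1 \<longrightarrow> norm x \<ge> R \<longrightarrow> \<bar>\<omega> (x, v)\<bar> < e \<and> dnorm \<omega> (x, v) < e"
    using assms(1) unfolding C01_def by blast
  have ne: "Xset \<noteq> ({} :: ('a \<times> 'a) set)" unfolding Xset_def
    using vector_choose_size[of 1] by fastforce
  obtain B1 where B1: "\<forall>z\<in>Xset. \<bar>\<omega> z\<bar> \<le> B1"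
    using bdd_Xset[OF C01_cont[OF assms(1)]] v by (metis (no_types, lifting))
  have cd: "continuous_on Xset (dnorm \<omega>)"
  proof -
    have c1: "continuous_on Xset (\<lambda>z. norm (D z))"
      using D(1) Xset_Uset continuous_on_norm continuous_on_subset by blast
    have e: "\<And>z. z \<in> Xset \<Longrightarrow> norm (D z) = dnorm \<omega> z" using D(2) Xset_Uset by auto
    show ?thesis by (rule continuous_on_eq[OF c1 e])
  qed
  have "\<forall>e>0. \<exists>R. \<forall>x v. norm v = 1 \<longrightarrow> norm x \<ge> R \<longrightarrow> \<bar>dnorm \<omega> (x, v)\<bar> < e"
  proof (intro allI impI)
    fix e :: real assume "e > 0"
    then obtain R where R: "\<forall>x v. norm v = 1 \<longrightarrow> norm x \<ge> R \<longrightarrow> \<bar>\<omega> (x, v)\<bar> < e \<and> dnorm \<omega> (x, v) < e"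
      using v by blast
    show "\<exists>R. \<forall>x v. norm v = 1 \<longrightarrow> norm x \<ge> R \<longrightarrow> \<bar>dnorm \<omega> (x, v)\<bar> < e"
    proof (intro exI allI impI)
      fix x v :: 'a assume "norm v = 1" "norm x \<ge> R"
      moreover have "(x,v) \<in> Uset" using \<open>norm v = 1\<close> unfolding Uset_def by auto
      ultimately show "\<bar>dnorm \<omega> (x, v)\<bar> < e" using R D(2) by fastforce
    qed
  qed
  then obtain B2 where B2: "\<forall>z\<in>Xset. \<bar>dnorm \<omega> z\<bar> \<le> B2"
    using bdd_Xset[OF cd] by blast
  have pos: "0 \<le> dnorm \<omega> z" if "z \<in> Xset" for z using D(2)[OF subsetD[OF Xset_Uset that]] by simp
  have bd1: "bdd_above ((\<lambda>z. \<bar>\<omega> z\<bar>) ` Xset)" using B1 by (intro bdd_aboveI2[where M=B1]) blast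
  have bd2: "bdd_above (dnorm \<omega> ` Xset)" using B2 abs_le_D1 by (intro bdd_aboveI2[where M=B2]) blast
  have s1: "\<bar>\<omega> z\<bar> \<le> (SUP z\<in>Xset. \<bar>\<omega> z\<bar>)" if "z \<in> Xset" for z
    using cSUP_upper[OF that bd1] .
  have s2: "dnorm \<omega> z \<le> (SUP z\<in>Xset. dnorm \<omega> z)" if "z \<in> Xset" for z
    using cSUP_upper[OF that bd2] .
  obtain z0 :: "'a \<times> 'a" where z0: "z0 \<in> Xset" using ne by blast
  have p1: "0 \<le> (SUP z\<in>Xset. \<bar>\<omega> z\<bar>)" using s1[OF z0] by linarith
  have p2: "0 \<le> (SUP z\<in>Xset. dnorm \<omega> z)" using s2[OF z0] pos[OF z0] by linarith
  have nk: "(SUP z\<in>Xset. \<bar>\<omega> z\<bar>) + (SUP z\<in>Xset. dnorm \<omega> z) \<le> K"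
    using assms(2) unfolding norm1inf_def .
  show "\<And>z. z \<in> Xset \<Longrightarrow> \<bar>\<omega> z\<bar> \<le> K" using s1 p2 nk by fastforce
  show "\<And>z. z \<in> Xset \<Longrightarrow> dnorm \<omega> z \<le> K" using s2 p1 nk by fastforce
  show "\<And>z. z \<in> Xset \<Longrightarrow> 0 \<le> dnorm \<omega> z" using pos by blast
qed



lemma ext_sph_scale:
  fixes \<omega> :: "'a::euclidean_space \<times> 'a \<Rightarrow> real"
  assumes "r > 0"
  shows "ext_sph \<omega> \<circ> (\<lambda>p. (fst p, (1/r) *\<^sub>R snd p)) = ext_sph \<omega>"
proof
  fix p :: "'a \<times> 'a"
  obtain a w where p: "p = (a,w)" by fastforce
  show "(ext_sph \<omega> \<circ> (\<lambda>p. (fst p, (1/r) *\<^sub>R snd p))) p = ext_sph \<omega> p"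
  proof (cases "w = 0")
    case True thus ?thesis using p unfolding ext_sph_def by simp
  next
    case False
    have eq: "((1/r) *\<^sub>R w) /\<^sub>R norm ((1/r) *\<^sub>R w) = w /\<^sub>R norm w"
      using assms False by (simp add: field_simps)
    have "(ext_sph \<omega> \<circ> (\<lambda>p. (fst p, (1/r) *\<^sub>R snd p))) p = \<omega> (a, ((1/r) *\<^sub>R w) /\<^sub>R norm ((1/r) *\<^sub>R w))"
      unfolding p ext_sph_def by simp
    also have "\<dots> = \<omega> (a, w /\<^sub>R norm w)" by (simp only: eq)
    also have "\<dots> = ext_sph \<omega> p" unfolding p ext_sph_def by simp
    finally show ?thesis .
  qed
qed

lemma onorm_scale_snd:
  fixes r :: real
  assumes "r \<ge> 1/2"
  shows "onorm (\<lambda>p::'a::real_normed_vector \<times> 'b::real_normed_vector. (fst p, (1/r) *\<^sub>R snd p)) \<le> 2"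
proof (rule onorm_bound)
  show "0 \<le> (2::real)" by simp
  fix p :: "'a \<times> 'b"
  obtain a b where p: "p = (a,b)" by fastforce
  have r: "r > 0" "1/r \<le> 2" using assms by (auto simp: field_simps)
  have "norm b * (1/r) \<le> norm b * 2" using r by (intro mult_left_mono) auto
  hence "norm ((1/r) *\<^sub>R b) \<le> 2 * norm b" using r by (simp add: mult.commute)
  hence "(norm ((1/r) *\<^sub>R b))\<^sup>2 \<le> (2 * norm b)\<^sup>2" by (intro power_mono) auto
  hence "(norm a)\<^sup>2 + (norm ((1/r) *\<^sub>R b))\<^sup>2 \<le> 2\<^sup>2 * ((norm a)\<^sup>2 + (norm b)\<^sup>2)"
    by (simp add: power_mult_distrib) (smt (verit) zero_le_power2)
  hence "sqrt ((norm a)\<^sup>2 + (norm ((1/r) *\<^sub>R b))\<^sup>2) \<le> sqrt (2\<^sup>2 * ((norm a)\<^sup>2 + (norm b)\<^sup>2))"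
    using real_sqrt_le_mono by blast
  also have "\<dots> = 2 * sqrt ((norm a)\<^sup>2 + (norm b)\<^sup>2)" by (subst real_sqrt_mult) simp
  finally show "norm (fst p, (1/r) *\<^sub>R snd p) \<le> 2 * norm p" using p by (simp add: norm_Pair)
qed

lemma lip_C01:
  fixes \<omega> :: "'a::euclidean_space \<times> 'a \<Rightarrow> real"
  assumes "C01 \<omega>" and M: "\<And>z. z \<in> Xset \<Longrightarrow> dnorm \<omega> z \<le> M" and "0 \<le> M"
    and u: "norm u = 1" and u': "norm u' = 1" and uu: "norm (u - u') \<le> 1/2"
  shows "\<bar>\<omega> (x, u) - \<omega> (x', u')\<bar> \<le> 2 * M * (norm (x - x') + norm (u - u'))"
proof -
  obtain D where D0: "\<And>z. z\<in>Uset \<Longrightarrow> (ext_sph \<omega> has_derivative blinfun_apply (D z)) (at z)"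
    and D: "continuous_on Uset D" "\<And>z. z\<in>Uset \<Longrightarrow> dnorm \<omega> z = norm (D z)"
    using C01_D[OF assms(1)] by metis
  define S where "S = (UNIV :: 'a set) \<times> cball u' (1/2)"
  define L where "L = (\<lambda>z::'a\<times>'a. \<lambda>p::'a\<times>'a. (fst p, (1/norm (snd z)) *\<^sub>R snd p))"
  define f' where "f' = (\<lambda>z. blinfun_apply (D (L z z)) \<circ> L z)"
  have cvx: "convex S" unfolding S_def by (intro convex_Times convex_UNIV convex_cball)
  have nS: "norm (snd z) \<ge> 1/2" if "z \<in> S" for z
  proof -
    have "norm (snd z - u') \<le> 1/2" using that unfolding S_def by (auto simp: dist_norm norm_minus_commute)
    moreover have "norm u' \<le> norm (snd z) + norm (snd z - u')" using norm_triangle_ineq4[of "snd z" "snd z - u'"] by simp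
    ultimately show ?thesis using u' by linarith
  qed
  have blL: "bounded_linear (L z)" for z
    unfolding L_def by (intro bounded_linear_Pair bounded_linear_fst bounded_linear_compose[OF bounded_linear_scaleR_right bounded_linear_snd])
  have LX: "L z z \<in> Xset" if "z \<in> S" for z
  proof -
    have "snd z \<noteq> 0" using nS[OF that] by auto
    thus ?thesis unfolding L_def Xset_def by (simp add: norm_divide)
  qed
  have der: "(ext_sph \<omega> has_derivative f' z) (at z within S)" if "z \<in> S" for z
  proof -
    have r: "norm (snd z) > 0" using nS[OF that] by linarith
    have "(L z has_derivative L z) (at z)" using blL bounded_linear_imp_has_derivative by blast
    moreover have "(ext_sph \<omega> has_derivative blinfun_apply (D (L z z))) (at (L z z))"
      using D0 LX[OF that] Xset_Uset by blast
    ultimately have "(ext_sph \<omega> \<circ> L z has_derivative f' z) (at z)"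
      unfolding f'_def using diff_chain_at by blast
    moreover have "ext_sph \<omega> \<circ> L z = ext_sph \<omega>" unfolding L_def by (rule ext_sph_scale[OF r])
    ultimately show ?thesis using has_derivative_at_withinI by metis
  qed
  have bnd: "onorm (f' z) \<le> M * 2" if "z \<in> S" for z
  proof -
    have "onorm (f' z) \<le> onorm (blinfun_apply (D (L z z))) * onorm (L z)"
      unfolding f'_def using onorm_compose blL blinfun.bounded_linear_right by blast
    moreover have "onorm (blinfun_apply (D (L z z))) \<le> M"
      using D(2) M LX[OF that] Xset_Uset by (metis norm_blinfun.rep_eq subsetD)
    moreover have "onorm (L z) \<le> 2" unfolding L_def using onorm_scale_snd nS[OF that] by blast
    moreover have "0 \<le> onorm (blinfun_apply (D (L z z)))" by (simp add: onorm_pos_le blinfun.bounded_linear_right)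
    ultimately show ?thesis using \<open>0 \<le> M\<close> by (meson mult_mono order_trans onorm_pos_le blL)
  qed
  have xS: "(x,u) \<in> S" using uu unfolding S_def by (simp add: dist_norm norm_minus_commute)
  have yS: "(x',u') \<in> S" unfolding S_def by simp
  have "norm (ext_sph \<omega> (x,u) - ext_sph \<omega> (x',u')) \<le> (M*2) * norm ((x,u) - (x',u'))"
    using differentiable_bound[OF cvx der bnd xS yS] by blast
  moreover have "norm ((x,u) - (x',u')) \<le> norm (x - x') + norm (u - u')"
    using norm_Pair_le by simp
  ultimately have "norm (ext_sph \<omega> (x,u) - ext_sph \<omega> (x',u')) \<le> (M*2) * (norm (x - x') + norm (u - u'))"
    using \<open>0 \<le> M\<close> by (smt (verit) mult_left_mono)
  thus ?thesis using ext_sph_unit[OF u, of \<omega> x] ext_sph_unit[OF u', of \<omega> x'] by (simp add: mult.commute mult.left_commute)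
qed



lemma unit_diff:
  fixes a b :: "'a::real_normed_vector"
  assumes "b \<noteq> 0"
  shows "norm (a /\<^sub>R norm a - b /\<^sub>R norm b) \<le> 2 * norm (a - b) / norm b"
proof (cases "a = 0")
  case True thus ?thesis using assms by simp
next
  case False
  have nb: "norm b > 0" "norm a > 0" using assms False by auto
  have "norm (a /\<^sub>R norm a - a /\<^sub>R norm b) = \<bar>1/norm a - 1/norm b\<bar> * norm a"
  proof -
    have "a /\<^sub>R norm a - a /\<^sub>R norm b = (1/norm a - 1/norm b) *\<^sub>R a"
      by (simp add: scaleR_diff_left divide_inverse_commute)
    thus ?thesis by simp
  qed
  also have "\<dots> = \<bar>norm b - norm a\<bar> / norm b" using nb by (simp add: field_simps abs_div)
  also have "\<dots> \<le> norm (a - b) / norm b" using nb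
    by (intro divide_right_mono) (auto simp: norm_triangle_ineq3 abs_minus_commute)
  finally have 1: "norm (a /\<^sub>R norm a - a /\<^sub>R norm b) \<le> norm (a - b) / norm b" .
  have 2: "norm (a /\<^sub>R norm b - b /\<^sub>R norm b) = norm (a - b) / norm b"
    by (metis norm_scaleR abs_norm_cancel divide_inverse_commute scaleR_diff_right inverse_eq_divide mult.commute abs_inverse)
  have "norm (a /\<^sub>R norm a - b /\<^sub>R norm b) \<le> norm (a /\<^sub>R norm a - a /\<^sub>R norm b) + norm (a /\<^sub>R norm b - b /\<^sub>R norm b)"
    by (rule norm_diff_triangle_le[OF order_refl order_refl])
  thus ?thesis using 1 2 by simp
qed



lemma integrand_cont:
  fixes \<omega> :: "'a::euclidean_space \<times> 'a \<Rightarrow> real"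
  assumes "C01 \<omega>" "continuous_on {0..1} c" "continuous_on {0..1} dc" "\<And>t. t \<in> {0..1} \<Longrightarrow> dc t \<noteq> 0"
  shows "continuous_on {0..1} (\<lambda>t. \<omega> (c t, dc t /\<^sub>R norm (dc t)) * norm (dc t))"
proof -
  have "continuous_on {0..1} (\<lambda>t. (c t, dc t /\<^sub>R norm (dc t)))"
    using assms(2-4) by (intro continuous_intros) auto
  moreover have "(\<lambda>t. (c t, dc t /\<^sub>R norm (dc t))) ` {0..1} \<subseteq> Xset"
    using assms(4) unfolding Xset_def by auto
  ultimately have "continuous_on {0..1} (\<lambda>t. \<omega> (c t, dc t /\<^sub>R norm (dc t)))"
    using continuous_on_compose2[OF C01_cont[OF assms(1)]] by blast
  thus ?thesis using assms(3) by (intro continuous_intros)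
qed

lemma est:
  fixes \<omega> :: "'a::euclidean_space \<times> 'a \<Rightarrow> real" and c e dc de :: "real \<Rightarrow> 'a"
  assumes om: "C01 \<omega>" and A: "\<And>z. z \<in> Xset \<Longrightarrow> \<bar>\<omega> z\<bar> \<le> B"
    and dn: "\<And>z. z \<in> Xset \<Longrightarrow> dnorm \<omega> z \<le> B" and B0: "0 \<le> B"
    and cc: "continuous_on {0..1} c" and ce: "continuous_on {0..1} e"
    and cdc: "continuous_on {0..1} dc" and cde: "continuous_on {0..1} de"
    and m: "\<And>t. t \<in> {0..1} \<Longrightarrow> norm (dc t) \<ge> m" and m0: "m > 0"
    and W: "\<And>t. t \<in> {0..1} \<Longrightarrow> norm (dc t) \<le> W"
    and de0: "\<And>t. t \<in> {0..1} \<Longrightarrow> de t \<noteq> 0"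
    and d1: "\<And>t. t \<in> {0..1} \<Longrightarrow> norm (e t - c t) \<le> \<delta>"
    and d2: "\<And>t. t \<in> {0..1} \<Longrightarrow> norm (de t - dc t) \<le> \<delta>"
    and d3: "4 * \<delta> \<le> m"
  shows "\<bar>integral {0..1} (\<lambda>t. \<omega> (e t, de t /\<^sub>R norm (de t)) * norm (de t))
         - integral {0..1} (\<lambda>t. \<omega> (c t, dc t /\<^sub>R norm (dc t)) * norm (dc t))\<bar>
         \<le> 2 * B * (\<delta> + 2 * \<delta> / m) * (W + \<delta>) + B * \<delta>"
proof -
  have dc0: "dc t \<noteq> 0" if "t \<in> {0..1}" for t using m[OF that] m0 by auto
  let ?g = "\<lambda>t. \<omega> (e t, de t /\<^sub>R norm (de t)) * norm (de t)"
  let ?h = "\<lambda>t. \<omega> (c t, dc t /\<^sub>R norm (dc t)) * norm (dc t)"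
  have cg: "continuous_on {0..1} ?g" by (rule integrand_cont[OF om ce cde de0])
  have ch: "continuous_on {0..1} ?h" by (rule integrand_cont[OF om cc cdc dc0])
  have ig: "?g integrable_on {0..1}" using cg integrable_continuous_real by blast
  have ih: "?h integrable_on {0..1}" using ch integrable_continuous_real by blast
  have eq: "integral {0..1} ?g - integral {0..1} ?h = integral {0..1} (\<lambda>t. ?g t - ?h t)"
    using integral_diff[OF ig ih] by simp
  have pt: "norm (?g t - ?h t) \<le> 2 * B * (\<delta> + 2 * \<delta> / m) * (W + \<delta>) + B * \<delta>" if t: "t \<in> {0..1}" for t
  proof -
    define ue where "ue = de t /\<^sub>R norm (de t)"
    define uc where "uc = dc t /\<^sub>R norm (dc t)"
    have nue: "norm ue = 1" using de0[OF t] unfolding ue_def by simp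
    have nuc: "norm uc = 1" using dc0[OF t] unfolding uc_def by simp
    have "norm (ue - uc) \<le> 2 * norm (de t - dc t) / norm (dc t)"
      unfolding ue_def uc_def by (rule unit_diff[OF dc0[OF t]])
    also have "\<dots> \<le> 2 * \<delta> / m"
      using d2[OF t] m[OF t] m0 d1[OF t] norm_ge_zero[of "e t - c t"] by (intro frac_le) linarith+
    finally have uu: "norm (ue - uc) \<le> 2 * \<delta> / m" .
    have "2 * \<delta> / m \<le> 1/2" using d3 m0 by (simp add: field_simps)
    hence uu2: "norm (ue - uc) \<le> 1/2" using uu by linarith
    have d0: "0 \<le> \<delta>" using d1[OF t] norm_ge_zero order_trans by blast
    have lip: "\<bar>\<omega> (e t, ue) - \<omega> (c t, uc)\<bar> \<le> 2 * B * (\<delta> + 2 * \<delta> / m)"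
    proof -
      have "\<bar>\<omega> (e t, ue) - \<omega> (c t, uc)\<bar> \<le> 2 * B * (norm (e t - c t) + norm (ue - uc))"
        by (rule lip_C01[OF om dn B0 nue nuc uu2])
      also have "\<dots> \<le> 2 * B * (\<delta> + 2 * \<delta> / m)"
        using d1[OF t] uu B0 by (intro mult_left_mono add_mono) auto
      finally show ?thesis .
    qed
    have nde: "norm (de t) \<le> W + \<delta>"
      using W[OF t] d2[OF t] norm_triangle_ineq2[of "de t" "dc t"] by linarith
    have ndd: "\<bar>norm (de t) - norm (dc t)\<bar> \<le> \<delta>"
      using d2[OF t] norm_triangle_ineq3[of "de t" "dc t"] by linarith
    have Ac: "\<bar>\<omega> (c t, uc)\<bar> \<le> B" using A nuc unfolding Xset_def by auto
    have "?g t - ?h t = (\<omega> (e t, ue) - \<omega> (c t, uc)) * norm (de t) + \<omega> (c t, uc) * (norm (de t) - norm (dc t))"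
      unfolding ue_def uc_def by (simp add: algebra_simps)
    hence "norm (?g t - ?h t) \<le> \<bar>\<omega> (e t, ue) - \<omega> (c t, uc)\<bar> * norm (de t) + \<bar>\<omega> (c t, uc)\<bar> * \<bar>norm (de t) - norm (dc t)\<bar>"
      by (simp add: abs_mult abs_triangle_ineq[THEN order_trans])
    also have "\<dots> \<le> 2 * B * (\<delta> + 2 * \<delta> / m) * (W + \<delta>) + B * \<delta>"
      using lip nde ndd Ac by (intro add_mono mult_mono) auto
    finally show ?thesis .
  qed
  have "norm (integral {0..1} (\<lambda>t. ?g t - ?h t)) \<le> (2 * B * (\<delta> + 2 * \<delta> / m) * (W + \<delta>) + B * \<delta>) * (1 - 0)"
    using pt cg ch by (intro integral_bound) (auto intro: continuous_intros)
  thus ?thesis using eq by simp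
qed



lemma immersion_facts:
  assumes "C1_immersion per c"
  shows "continuous_on {0..1} c" "continuous_on {0..1} (cder per c)"
    "\<And>t. t \<in> {0..1} \<Longrightarrow> cder per c t \<noteq> 0"
proof -
  have sub: "{0..1} \<subseteq> Dset per" unfolding Dset_def by auto
  have "continuous_on (Dset per) c"
    using assms unfolding C1_immersion_def
    by (meson continuous_on_eq_continuous_within has_vector_derivative_continuous)
  thus "continuous_on {0..1} c" using sub continuous_on_subset by blast
  show "continuous_on {0..1} (cder per c)"
    using assms sub continuous_on_subset unfolding C1_immersion_def by blast
  show "\<And>t. t \<in> {0..1} \<Longrightarrow> cder per c t \<noteq> 0"
    using assms sub unfolding C1_immersion_def by blast
qed

lemma bdd_norm_cont:
  fixes f :: "real \<Rightarrow> 'a::real_normed_vector"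
  assumes "continuous_on {0..1} f"
  shows "bdd_above ((\<lambda>t. norm (f t)) ` {0..1})"
proof -
  have "compact (f ` {0..1})" using assms compact_continuous_image compact_Icc by blast
  then obtain B where "\<forall>x\<in>f ` {0..1}. norm x \<le> B" using compact_imp_bounded bounded_iff by metis
  thus ?thesis by (intro bdd_aboveI2) auto
qed

lemma dist1inf_bounds:
  assumes "C1_immersion per c" "C1_immersion per e" "t \<in> {0..1}"
  shows "norm (c t - e t) \<le> dist1inf per c e" "norm (cder per c t - cder per e t) \<le> dist1inf per c e"
proof -
  note fc = immersion_facts[OF assms(1)] and fe = immersion_facts[OF assms(2)]
  have b1: "bdd_above ((\<lambda>t. norm (c t - e t)) ` {0..1})"
    using fc fe by (intro bdd_norm_cont continuous_intros)
  have b2: "bdd_above ((\<lambda>t. norm (cder per c t - cder per e t)) ` {0..1})"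
    using fc fe by (intro bdd_norm_cont continuous_intros)
  have s1: "norm (c t - e t) \<le> (SUP t\<in>{0..1}. norm (c t - e t))" using cSUP_upper[OF assms(3) b1] .
  have s2: "norm (cder per c t - cder per e t) \<le> (SUP t\<in>{0..1}. norm (cder per c t - cder per e t))"
    using cSUP_upper[OF assms(3) b2] .
  have "0 \<le> norm (c t - e t)" "0 \<le> norm (cder per c t - cder per e t)" by auto
  thus "norm (c t - e t) \<le> dist1inf per c e" "norm (cder per c t - cder per e t) \<le> dist1inf per c e"
    using s1 s2 unfolding dist1inf_def by linarith+
qed

theorem lemma3p3:
  fixes K :: "'a::euclidean_space \<times> 'a \<Rightarrow> 'a \<times> 'a \<Rightarrow> real"
    and kx :: "'a \<times> 'a \<Rightarrow> 'h::{real_inner, complete_space}"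
    and per :: bool
    and c :: "nat \<Rightarrow> real \<Rightarrow> 'a"
    and c_inf :: "real \<Rightarrow> 'a"
  assumes "pos_def_kernel K Xset"
    and "is_rkhs K Xset kx"
    and "cont_embedded_C01 kx"
    and "\<And>p. C1_immersion per (c p)"
    and "C1_immersion per c_inf"
    and "(\<lambda>p. dist1inf per (c p) c_inf) \<longlonglongrightarrow> 0"
  shows "(\<lambda>p. Vnorm kx (\<lambda>\<omega>. mu_curve per (c p) \<omega> - mu_curve per c_inf \<omega>)) \<longlonglongrightarrow> 0"
proof -
  obtain C where C01f: "\<And>f. C01 (rk_eval kx f)" and Cb: "\<And>f. norm1inf (rk_eval kx f) \<le> C * norm f"
    using assms(3) unfolding cont_embedded_C01_def by blast
  define B where "B = max C 0"
  have B0: "0 \<le> B" unfolding B_def by simp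
  have Bf: "norm1inf (rk_eval kx f) \<le> B" if "norm f \<le> 1" for f
  proof -
    have "C * norm f \<le> B * norm f" unfolding B_def by (intro mult_right_mono) auto
    also have "\<dots> \<le> B * 1" using that B0 by (intro mult_left_mono) auto
    finally show ?thesis using Cb[of f] by simp
  qed
  note fi = immersion_facts[OF assms(5)]
  have cn: "continuous_on {0..1::real} (\<lambda>t. norm (cder per c_inf t))" using fi(2) by (intro continuous_intros)
  obtain t1 where t1: "t1 \<in> {0..1}" "\<And>s. s \<in> {0..1} \<Longrightarrow> norm (cder per c_inf t1) \<le> norm (cder per c_inf s)"
    using continuous_attains_inf[OF compact_Icc _ cn] by (metis atLeastAtMost_iff empty_iff zero_le_one order_refl)
  obtain t2 where t2: "t2 \<in> {0..1}" "\<And>s. s \<in> {0..1} \<Longrightarrow> norm (cder per c_inf s) \<le> norm (cder per c_inf t2)"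
    using continuous_attains_sup[OF compact_Icc _ cn] by (metis atLeastAtMost_iff empty_iff zero_le_one order_refl)
  define m where "m = norm (cder per c_inf t1)"
  define W where "W = norm (cder per c_inf t2)"
  have m0: "m > 0" unfolding m_def using fi(3)[OF t1(1)] by simp
  define \<delta> where "\<delta> = (\<lambda>p. dist1inf per (c p) c_inf)"
  define \<beta> where "\<beta> = (\<lambda>d. 2 * B * (d + 2 * d / m) * (W + d) + B * d)"
  define V where "V = (\<lambda>p. Vnorm kx (\<lambda>\<omega>. mu_curve per (c p) \<omega> - mu_curve per c_inf \<omega>))"
  have ev: "eventually (\<lambda>p. \<delta> p < m/4) sequentially"
    using order_tendstoD(2)[OF assms(6), of "m/4"] m0 unfolding \<delta>_def by simp
  have key: "0 \<le> V p \<and> V p \<le> \<beta> (\<delta> p)" if dp: "\<delta> p < m/4" for p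
  proof -
    note fp = immersion_facts[OF assms(4)[of p]]
    have trm: "mu_curve per (c p) (rk_eval kx f) - mu_curve per c_inf (rk_eval kx f) \<le> \<beta> (\<delta> p)"
      if f: "f \<in> {f. norm f \<le> 1}" for f
    proof -
      have nf: "norm f \<le> 1" using f by simp
      note bd = C01_bounds[OF C01f[of f] Bf[OF nf]]
      have "\<bar>mu_curve per (c p) (rk_eval kx f) - mu_curve per c_inf (rk_eval kx f)\<bar> \<le> \<beta> (\<delta> p)"
        unfolding mu_curve_def \<beta>_def
      proof (rule est[OF C01f bd(1) bd(2) B0 fi(1) fp(1) fi(2) fp(2)])
        show "\<And>t. t \<in> {0..1} \<Longrightarrow> m \<le> norm (cder per c_inf t)" using t1 unfolding m_def by blast
        show "0 < m" by (rule m0)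
        show "\<And>t. t \<in> {0..1} \<Longrightarrow> norm (cder per c_inf t) \<le> W" using t2 unfolding W_def by blast
        show "\<And>t. t \<in> {0..1} \<Longrightarrow> cder per (c p) t \<noteq> 0" by (rule fp(3))
        show "\<And>t. t \<in> {0..1} \<Longrightarrow> norm (c p t - c_inf t) \<le> \<delta> p"
          unfolding \<delta>_def by (rule dist1inf_bounds[OF assms(4) assms(5)])
        show "\<And>t. t \<in> {0..1} \<Longrightarrow> norm (cder per (c p) t - cder per c_inf t) \<le> \<delta> p"
          unfolding \<delta>_def by (rule dist1inf_bounds[OF assms(4) assms(5)])
        show "4 * \<delta> p \<le> m" using dp by simp
      qed
      thus ?thesis by simp
    qed
    have ne: "{f::'h. norm f \<le> 1} \<noteq> {}" by (metis mem_Collect_eq norm_zero zero_le_one empty_iff)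
    have up: "V p \<le> \<beta> (\<delta> p)" unfolding V_def Vnorm_def
      by (rule cSUP_least[OF ne trm])
    have bdd: "bdd_above ((\<lambda>f. mu_curve per (c p) (rk_eval kx f) - mu_curve per c_inf (rk_eval kx f)) ` {f. norm f \<le> 1})"
      using trm by (intro bdd_aboveI2) blast
    have z: "(0::'h) \<in> {f. norm f \<le> 1}" by simp
    have "mu_curve per (c p) (rk_eval kx 0) - mu_curve per c_inf (rk_eval kx 0) \<le> V p"
      unfolding V_def Vnorm_def by (rule cSUP_upper[OF z bdd])
    moreover have "rk_eval kx 0 = (\<lambda>z. 0)" unfolding rk_eval_def by simp
    ultimately have "0 \<le> V p" unfolding mu_curve_def by simp
    thus ?thesis using up by simp
  qed
  have lo: "eventually (\<lambda>p. 0 \<le> V p) sequentially"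
    using ev by (rule eventually_mono) (use key in blast)
  have hi: "eventually (\<lambda>p. V p \<le> \<beta> (\<delta> p)) sequentially"
    using ev by (rule eventually_mono) (use key in blast)
  have "(\<lambda>p. \<beta> (\<delta> p)) \<longlonglongrightarrow> 2 * B * (0 + 2 * 0 / m) * (W + 0) + B * 0"
    unfolding \<beta>_def using assms(6) m0 unfolding \<delta>_def by (intro tendsto_intros) auto
  hence bt: "(\<lambda>p. \<beta> (\<delta> p)) \<longlonglongrightarrow> 0" by simp
  have "V \<longlonglongrightarrow> 0" using tendsto_sandwich[OF lo hi tendsto_const bt] .
  thus ?thesis unfolding V_def .
qed


end
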